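(* Let $0<\alpha<\beta<1$, $\theta\in[0,1)$ and $w\in V^\perp(\theta)$. Then: (i) $w''=0$ on $Q_0=(\alpha,\beta)$; in particular $w(y)=(w(\beta)-w(\alpha))(\beta-\alpha)^{-1}(y-\alpha)+w(\alpha)$ for $y\in Q_0$; (ii) if $\theta\neq0$, then $(\beta-\alpha)^{-1}(w(\beta)-w(\alpha))=\bigl(1-e^{-2\pi i\theta}\bigr)^{-1}\bigl(\alpha+(1-\beta)e^{-2\pi i\theta}\bigr)\int_{Q_1}w(y)\,dy$; (iii) if $\theta=0$, then $\int_{Q_1}w(y)\,dy=0$.
   Context: $Q=(0,1)$, $Q_1=(0,\alpha)\cup(\beta,1)$. Let $p$ be a $1$-periodic measurable function with $p>0$, $p,p^{-1}\in L^\infty(0,1)$. For $\theta\in[0,1)$, $H^1_\theta(Q)=\{u\in H^1(0,1):u(1)=e^{2\pi i\theta}u(0)\}$ and $V(\theta)=\{v\in H^1_\theta(Q):p v'=0\text{ a.e. on }Q_1\}$. $V^\perp(\theta)$ is the orthogonal complement of $V(\theta)$ in $H^1_\theta(Q)$ with respect to the inner product $\langle u,v\rangle=\bigl(\int_{Q_1}u\bigr)\overline{\bigl(\int_{Q_1}v\bigr)}+\int_Qu'\overline{v'}$. *)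

theory Defs
  imports "HOL-Analysis.Analysis"
begin

definition Q1 :: "real \<Rightarrow> real \<Rightarrow> real set" where
  "Q1 \<alpha> \<beta> = {0<..<\<alpha>} \<union> {\<beta><..<1}"

text \<open>H^1(0,1): u (its continuous representative on [0,1]) together with a weak
  derivative u' in L^2(0,1), u(x) = u(0) + integral from 0 to x of u'.\<close>
definition H1 :: "(real \<Rightarrow> complex) \<Rightarrow> (real \<Rightarrow> complex) \<Rightarrow> bool" where
  "H1 u u' \<longleftrightarrow>
     set_borel_measurable lborel {0<..<1} u' \<and>
     set_integrable lborel {0<..<1} u' \<and>
     set_integrable lborel {0<..<1} (\<lambda>x. (cmod (u' x))^2) \<and>
     (\<forall>x\<in>{0..1}. u x = u 0 + (LINT t:{0..x}|lborel. u' t))"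

definition H1_theta :: "real \<Rightarrow> (real \<Rightarrow> complex) \<Rightarrow> (real \<Rightarrow> complex) \<Rightarrow> bool" where
  "H1_theta \<theta> u u' \<longleftrightarrow> H1 u u' \<and> u 1 = exp (\<i> * complex_of_real (2 * pi * \<theta>)) * u 0"

definition inV :: "(real \<Rightarrow> real) \<Rightarrow> real \<Rightarrow> real \<Rightarrow> real \<Rightarrow>
    (real \<Rightarrow> complex) \<Rightarrow> (real \<Rightarrow> complex) \<Rightarrow> bool" where
  "inV p \<alpha> \<beta> \<theta> v v' \<longleftrightarrow> H1_theta \<theta> v v' \<and>
     (AE x in lborel. x \<in> Q1 \<alpha> \<beta> \<longrightarrow> complex_of_real (p x) * v' x = 0)"

definition ip :: "real \<Rightarrow> real \<Rightarrow> (real \<Rightarrow> complex) \<Rightarrow> (real \<Rightarrow> complex) \<Rightarrow>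
    (real \<Rightarrow> complex) \<Rightarrow> (real \<Rightarrow> complex) \<Rightarrow> complex" where
  "ip \<alpha> \<beta> u u' v v' =
     (LINT y:Q1 \<alpha> \<beta>|lborel. u y) * cnj (LINT y:Q1 \<alpha> \<beta>|lborel. v y)
     + (LINT y:{0<..<1}|lborel. u' y * cnj (v' y))"

definition inVperp :: "(real \<Rightarrow> real) \<Rightarrow> real \<Rightarrow> real \<Rightarrow> real \<Rightarrow>
    (real \<Rightarrow> complex) \<Rightarrow> (real \<Rightarrow> complex) \<Rightarrow> bool" where
  "inVperp p \<alpha> \<beta> \<theta> w w' \<longleftrightarrow> H1_theta \<theta> w w' \<and>
     (\<forall>v v'. inV p \<alpha> \<beta> \<theta> v v' \<longrightarrow> ip \<alpha> \<beta> w w' v v' = 0)"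

end

theory Submission
  imports Defs
begin

lemma sic: "set_integrable lborel {a<..<b::real} (\<lambda>_. c::'a::{banach, second_countable_topology})"
proof -
  have "integrable lborel (\<lambda>x. indicator {a<..<b} x :: real)"
    by (cases "a \<le> b") (auto simp: integrable_indicator_iff)
  then show ?thesis unfolding set_integrable_def by (rule integrable_scaleR_left)
qed

lemma si_meas: "set_integrable M A (f::_\<Rightarrow>'a::{banach, second_countable_topology}) \<Longrightarrow> set_borel_measurable M A f"
  unfolding set_integrable_def set_borel_measurable_def by (rule borel_measurable_integrable)

lemma si_cnj: "set_integrable M A (f::_\<Rightarrow>complex) \<Longrightarrow> set_integrable M A (\<lambda>t. cnj (f t))"
proof -
  assume a: "set_integrable M A f"
  have eq: "(\<lambda>x. indicator A x *\<^sub>R cnj (f x)) = (\<lambda>x. cnj (indicator A x *\<^sub>R f x))"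
    by (simp add: complex_cnj_scaleR)
  show ?thesis unfolding set_integrable_def eq
    by (rule integrable_cnj) (use a in \<open>simp add: set_integrable_def\<close>)
qed

lemma si_cnj_int: "(LINT t:A|M. cnj (f t)) = cnj (LINT t:A|M. (f t::complex))"
proof -
  have eq: "(\<lambda>x. indicator A x *\<^sub>R cnj (f x)) = (\<lambda>x. cnj (indicator A x *\<^sub>R f x))"
    by (simp add: complex_cnj_scaleR)
  show ?thesis unfolding set_lebesgue_integral_def eq by (rule Bochner_Integration.integral_cnj)
qed

lemma si_ofreal: "set_integrable M A (f::_\<Rightarrow>real) \<Longrightarrow> set_integrable M A (\<lambda>t. complex_of_real (f t))"
proof -
  assume a: "set_integrable M A f"
  have eq: "(\<lambda>x. indicator A x *\<^sub>R complex_of_real (f x)) = (\<lambda>x. complex_of_real (indicator A x *\<^sub>R f x))"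
    by (simp add: scaleR_conv_of_real)
  show ?thesis unfolding set_integrable_def eq
    by (rule integrable_of_real) (use a in \<open>simp add: set_integrable_def\<close>)
qed

lemma set_int_restrict:
  fixes f g :: "real \<Rightarrow> complex"
  assumes "A \<subseteq> B" "\<And>t. t \<in> A \<Longrightarrow> f t = g t" "\<And>t. t \<in> B \<Longrightarrow> t \<notin> A \<Longrightarrow> f t = 0"
  shows "(LINT t:B|M. f t) = (LINT t:A|M. g t)"
  unfolding set_lebesgue_integral_def
  by (rule Bochner_Integration.integral_cong) (use assms in \<open>auto split: split_indicator\<close>)

lemma H1_int: "H1 u u' \<Longrightarrow> 0 \<le> a \<Longrightarrow> b \<le> 1 \<Longrightarrow> set_integrable lborel {a<..<b} u'"
  unfolding H1_def by (auto intro: set_integrable_subset)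

lemma H1_diff:
  assumes "H1 u u'" "0 \<le> a" "a \<le> b" "b \<le> 1"
  shows "u b - u a = (LINT t:{a<..<b}|lborel. u' t)"
proof -
  have Hx: "\<And>x. x \<in> {0..1} \<Longrightarrow> u x = u 0 + (LINT t:{0..x}|lborel. u' t)"
    using assms(1) unfolding H1_def by blast
  have b0: "0 \<le> b" using assms by linarith
  have ub: "u b = u 0 + interval_lebesgue_integral lborel (ereal 0) (ereal b) u'"
    using Hx[of b] interval_integral_Icc[OF b0, of u'] assms b0 by simp
  have ua: "u a = u 0 + interval_lebesgue_integral lborel (ereal 0) (ereal a) u'"
    using Hx[of a] interval_integral_Icc[OF assms(2), of u'] assms b0 by simp
  have int: "interval_lebesgue_integrable lborel (ereal 0) (ereal b) u'"
    using H1_int[OF assms(1) order_refl assms(4)] assms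
    by (simp add: interval_lebesgue_integrable_def)
  have sum: "interval_lebesgue_integral lborel (ereal 0) (ereal a) u' + interval_lebesgue_integral lborel (ereal a) (ereal b) u'
      = interval_lebesgue_integral lborel (ereal 0) (ereal b) u'"
    by (rule interval_integral_sum) (use int assms in \<open>simp add: min_def max_def\<close>)
  have "interval_lebesgue_integral lborel (ereal a) (ereal b) u' = (LINT t:{a<..<b}|lborel. u' t)"
    using assms by (simp add: interval_lebesgue_integral_def)
  then show ?thesis using ub ua sum by (simp add: algebra_simps)
qed

lemma tv_low:
  fixes g :: "real \<Rightarrow> complex"
  assumes "x \<le> \<alpha>"
  shows "(LINT t:{0..x}|lborel. indicator {\<alpha><..<\<beta>} t * g t) = 0"
proof -
  have "(LINT t:{0..x}|lborel. indicator {\<alpha><..<\<beta>} t * g t) = (LINT t:{0..x}|lborel. 0)"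
  proof (rule set_lebesgue_integral_cong)
    show "{0..x} \<in> sets lborel" by simp
    show "\<forall>t. t \<in> {0..x} \<longrightarrow> indicator {\<alpha><..<\<beta>} t * g t = 0"
    proof (intro allI impI)
      fix t assume "t \<in> {0..x}"
      then have "t \<notin> {\<alpha><..<\<beta>}" using assms by auto
      then show "indicator {\<alpha><..<\<beta>} t * g t = 0" by simp
    qed
  qed
  then show ?thesis by simp
qed

lemma tv_high:
  fixes g :: "real \<Rightarrow> complex"
  assumes "0 \<le> \<alpha>" "\<beta> \<le> x"
  shows "(LINT t:{0..x}|lborel. indicator {\<alpha><..<\<beta>} t * g t) = (LINT t:{\<alpha><..<\<beta>}|lborel. g t)"
proof (rule set_int_restrict)
  show "{\<alpha><..<\<beta>} \<subseteq> {0..x}" using assms by auto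
  fix t
  show "t \<in> {\<alpha><..<\<beta>} \<Longrightarrow> indicator {\<alpha><..<\<beta>} t * g t = g t" by simp
  show "t \<notin> {\<alpha><..<\<beta>} \<Longrightarrow> indicator {\<alpha><..<\<beta>} t * g t = 0" by simp
qed

lemma t_H1:
  fixes g :: "real \<Rightarrow> complex"
  assumes "0 \<le> \<alpha>" "\<beta> \<le> 1"
    and gi: "set_integrable lborel {\<alpha><..<\<beta>} g"
    and g2: "set_integrable lborel {\<alpha><..<\<beta>} (\<lambda>t. (cmod (g t))^2)"
  shows "H1 (\<lambda>x. a + (LINT t:{0..x}|lborel. indicator {\<alpha><..<\<beta>} t * g t)) (\<lambda>t. indicator {\<alpha><..<\<beta>} t * g t)"
proof -
  have e1: "(\<lambda>t. indicator {0<..<1} t *\<^sub>R (indicator {\<alpha><..<\<beta>} t * g t)) = (\<lambda>t. indicator {\<alpha><..<\<beta>} t *\<^sub>R g t)"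
  proof (rule ext)
    fix t show "indicator {0<..<1} t *\<^sub>R (indicator {\<alpha><..<\<beta>} t * g t) = indicator {\<alpha><..<\<beta>} t *\<^sub>R g t"
    proof (cases "t \<in> {\<alpha><..<\<beta>}")
      case True
      then have "t \<in> {0<..<1}" using assms(1,2) by auto
      then show ?thesis using True by simp
    qed simp
  qed
  have e2: "(\<lambda>t. indicator {0<..<1} t *\<^sub>R (cmod (indicator {\<alpha><..<\<beta>} t * g t))^2) = (\<lambda>t. indicator {\<alpha><..<\<beta>} t *\<^sub>R (cmod (g t))^2)"
  proof (rule ext)
    fix t show "indicator {0<..<1} t *\<^sub>R (cmod (indicator {\<alpha><..<\<beta>} t * g t))^2 = indicator {\<alpha><..<\<beta>} t *\<^sub>R (cmod (g t))^2"
    proof (cases "t \<in> {\<alpha><..<\<beta>}")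
      case True
      then have "t \<in> {0<..<1}" using assms(1,2) by auto
      then show ?thesis using True by simp
    qed simp
  qed
  have m: "set_borel_measurable lborel {\<alpha><..<\<beta>} g" using gi by (rule si_meas)
  show ?thesis unfolding H1_def
  proof (intro conjI ballI)
    show "set_borel_measurable lborel {0<..<1} (\<lambda>t. indicator {\<alpha><..<\<beta>} t * g t)"
      using m unfolding set_borel_measurable_def e1 .
    show "set_integrable lborel {0<..<1} (\<lambda>t. indicator {\<alpha><..<\<beta>} t * g t)"
      using gi unfolding set_integrable_def e1 .
    show "set_integrable lborel {0<..<1} (\<lambda>t. (cmod (indicator {\<alpha><..<\<beta>} t * g t))^2)"
      using g2 unfolding set_integrable_def e2 .
    fix x :: real
    show "a + (LINT t:{0..x}|lborel. indicator {\<alpha><..<\<beta>} t * g t) =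
      a + (LINT t:{0..0}|lborel. indicator {\<alpha><..<\<beta>} t * g t) + (LINT t:{0..x}|lborel. indicator {\<alpha><..<\<beta>} t * g t)"
      using tv_low[of 0 \<alpha> \<beta> g] assms(1) by simp
  qed
qed

lemma sq_bound: "(cmod (a - b))^2 \<le> 2 * (cmod a)^2 + 2 * (cmod b)^2"
proof -
  have "cmod (a - b) \<le> cmod a + cmod b" by (rule norm_triangle_ineq4)
  then have "(cmod (a - b))^2 \<le> (cmod a + cmod b)^2" by (simp add: power_mono)
  also have "\<dots> \<le> 2 * (cmod a)^2 + 2 * (cmod b)^2"
  proof -
    have "0 \<le> (cmod a - cmod b)^2" by simp
    then show ?thesis by (simp add: power2_diff power2_sum)
  qed
  finally show ?thesis .
qed

theorem lemma3p4:
  fixes p :: "real \<Rightarrow> real" and \<alpha> \<beta> \<theta> :: real and w w' :: "real \<Rightarrow> complex"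
  assumes p_meas: "p \<in> borel_measurable lborel"
    and p_per: "\<forall>x. p (x + 1) = p x"
    and p_pos: "\<forall>x. p x > 0"
    and p_bdd: "\<exists>M. AE x in lborel. x \<in> {0<..<1} \<longrightarrow> p x \<le> M \<and> 1 / p x \<le> M"
    and "0 < \<alpha>" and "\<alpha> < \<beta>" and "\<beta> < 1"
    and "0 \<le> \<theta>" and "\<theta> < 1"
    and w: "inVperp p \<alpha> \<beta> \<theta> w w'"
  shows "(\<exists>c. AE y in lborel. y \<in> {\<alpha><..<\<beta>} \<longrightarrow> w' y = c)
     \<and> (\<forall>y\<in>{\<alpha><..<\<beta>}. w y = (w \<beta> - w \<alpha>) / complex_of_real (\<beta> - \<alpha>) * complex_of_real (y - \<alpha>) + w \<alpha>)
     \<and> (\<theta> \<noteq> 0 \<longrightarrow>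
          (w \<beta> - w \<alpha>) / complex_of_real (\<beta> - \<alpha>) =
            inverse (1 - exp (- \<i> * complex_of_real (2 * pi * \<theta>)))
            * (complex_of_real \<alpha> + complex_of_real (1 - \<beta>) * exp (- \<i> * complex_of_real (2 * pi * \<theta>)))
            * (LINT y:Q1 \<alpha> \<beta>|lborel. w y))
     \<and> (\<theta> = 0 \<longrightarrow> (LINT y:Q1 \<alpha> \<beta>|lborel. w y) = 0)"
proof -
  have a0: "0 < \<alpha>" and ab: "\<alpha> < \<beta>" and b1: "\<beta> < 1" and t0: "0 \<le> \<theta>" and t1: "\<theta> < 1"
    using assms by auto
  have a0': "0 \<le> \<alpha>" using a0 by simp
  have b1': "\<beta> \<le> 1" using b1 by simp
  have H: "H1 w w'" and orth: "\<And>v v'. inV p \<alpha> \<beta> \<theta> v v' \<Longrightarrow> ip \<alpha> \<beta> w w' v v' = 0"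
    using w unfolding inVperp_def H1_theta_def by blast+
  have w201: "set_integrable lborel {0<..<1} (\<lambda>t. (cmod (w' t))^2)"
    and wm: "set_borel_measurable lborel {0<..<1} w'"
    using H unfolding H1_def by blast+
  have wS: "set_integrable lborel {\<alpha><..<\<beta>} w'" using H1_int[OF H a0' b1'] .
  have w2S: "set_integrable lborel {\<alpha><..<\<beta>} (\<lambda>t. (cmod (w' t))^2)"
    by (rule set_integrable_subset[OF w201]) (use a0 b1 in auto)
  define K where "K = (LINT t:{\<alpha><..<\<beta>}|lborel. w' t)"
  have K: "w \<beta> - w \<alpha> = K" unfolding K_def by (rule H1_diff[OF H]) (use a0 ab b1 in auto)
  define c where "c = K / complex_of_real (\<beta> - \<alpha>)"
  have nz: "complex_of_real (\<beta> - \<alpha>) \<noteq> 0" using ab by simp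
  have Kc: "K = complex_of_real (\<beta> - \<alpha>) * c" unfolding c_def using nz by simp
  have cK: "c = (w \<beta> - w \<alpha>) / complex_of_real (\<beta> - \<alpha>)" using K c_def by simp
  define I where "I = (LINT y:Q1 \<alpha> \<beta>|lborel. w y)"
  have Q1sets: "Q1 \<alpha> \<beta> \<in> sets lborel" by (simp add: Q1_def)
  have cS: "(LINT t:{\<alpha><..<\<beta>}|lborel. c) = complex_of_real (\<beta> - \<alpha>) * c"
    using ab by (simp add: set_integral_const scaleR_conv_of_real)

  define g1 where "g1 = (\<lambda>t. w' t - c)"
  have g1i: "set_integrable lborel {\<alpha><..<\<beta>} g1"
    unfolding g1_def by (rule set_integral_diff(1)[OF wS sic[of \<alpha> \<beta> c]])
  have g1int: "(LINT t:{\<alpha><..<\<beta>}|lborel. g1 t) = 0"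
    unfolding g1_def using set_integral_diff(2)[OF wS sic[of \<alpha> \<beta> c]] cS Kc K_def by simp
  have g1m: "set_borel_measurable lborel {\<alpha><..<\<beta>} g1" by (rule si_meas[OF g1i])
  have g12: "set_integrable lborel {\<alpha><..<\<beta>} (\<lambda>t. (cmod (g1 t))^2)"
  proof (rule set_integrable_bound[where f="\<lambda>t. 2 * (cmod (w' t))^2 + 2 * (cmod c)^2"])
    have "set_integrable lborel {\<alpha><..<\<beta>} (\<lambda>t. 2 * (cmod (w' t))^2)" using w2S by simp
    then show "set_integrable lborel {\<alpha><..<\<beta>} (\<lambda>t. 2 * (cmod (w' t))^2 + 2 * (cmod c)^2)"
      by (rule set_integral_add(1)[OF _ sic])
    have eq: "(\<lambda>x. indicator {\<alpha><..<\<beta>} x *\<^sub>R (cmod (g1 x))^2) = (\<lambda>x. (norm (indicator {\<alpha><..<\<beta>} x *\<^sub>R g1 x))^2)"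
      by (rule ext) (simp split: split_indicator)
    have hm[measurable]: "(\<lambda>x. indicator {\<alpha><..<\<beta>} x *\<^sub>R g1 x) \<in> borel_measurable lborel"
      using g1m unfolding set_borel_measurable_def .
    show "set_borel_measurable lborel {\<alpha><..<\<beta>} (\<lambda>t. (cmod (g1 t))^2)"
      unfolding set_borel_measurable_def eq by measurable
    show "AE x in lborel. x \<in> {\<alpha><..<\<beta>} \<longrightarrow> norm ((cmod (g1 x))^2) \<le> norm (2 * (cmod (w' x))^2 + 2 * (cmod c)^2)"
    proof (rule AE_I2, rule impI)
      fix x
      have "0 \<le> 2 * (cmod (w' x))^2 + 2 * (cmod c)^2" by simp
      then show "norm ((cmod (g1 x))^2) \<le> norm (2 * (cmod (w' x))^2 + 2 * (cmod c)^2)"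
        using sq_bound[of "w' x" c] unfolding g1_def by simp
    qed
  qed
  define v1' where "v1' = (\<lambda>t. indicator {\<alpha><..<\<beta>} t * g1 t)"
  define v1 where "v1 = (\<lambda>x. (0::complex) + (LINT t:{0..x}|lborel. indicator {\<alpha><..<\<beta>} t * g1 t))"
  have v1H: "H1 v1 v1'" unfolding v1_def v1'_def by (rule t_H1[OF a0' b1' g1i g12])
  have v1low: "\<And>x. x \<le> \<alpha> \<Longrightarrow> v1 x = 0" unfolding v1_def using tv_low by simp
  have v1high: "\<And>x. \<beta> \<le> x \<Longrightarrow> v1 x = 0" unfolding v1_def using tv_high[OF a0'] g1int by simp
  have v1V: "inV p \<alpha> \<beta> \<theta> v1 v1'"
    unfolding inV_def H1_theta_def
  proof (intro conjI)
    show "H1 v1 v1'" by (rule v1H)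
    show "v1 1 = exp (\<i> * complex_of_real (2 * pi * \<theta>)) * v1 0"
      using v1low[OF a0'] v1high[OF b1'] by simp
    show "AE x in lborel. x \<in> Q1 \<alpha> \<beta> \<longrightarrow> complex_of_real (p x) * v1' x = 0"
    proof (rule AE_I2, rule impI)
      fix x assume "x \<in> Q1 \<alpha> \<beta>"
      then have "x \<notin> {\<alpha><..<\<beta>}" unfolding Q1_def using ab by auto
      then show "complex_of_real (p x) * v1' x = 0" unfolding v1'_def by simp
    qed
  qed
  have ip1: "ip \<alpha> \<beta> w w' v1 v1' = 0" by (rule orth[OF v1V])
  have Qv1: "(LINT y:Q1 \<alpha> \<beta>|lborel. v1 y) = 0"
  proof -
    have "(LINT y:Q1 \<alpha> \<beta>|lborel. v1 y) = (LINT y:Q1 \<alpha> \<beta>|lborel. 0)"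
    proof (rule set_lebesgue_integral_cong[OF Q1sets], intro allI impI)
      fix y assume "y \<in> Q1 \<alpha> \<beta>"
      then have "y \<le> \<alpha> \<or> \<beta> \<le> y" unfolding Q1_def by auto
      then show "v1 y = 0" using v1low v1high by blast
    qed
    then show ?thesis by simp
  qed
  have A1: "(LINT t:{\<alpha><..<\<beta>}|lborel. w' t * cnj (g1 t)) = 0"
  proof -
    have "(LINT t:{0<..<1}|lborel. w' t * cnj (v1' t)) = (LINT t:{\<alpha><..<\<beta>}|lborel. w' t * cnj (g1 t))"
    proof (rule set_int_restrict)
      show "{\<alpha><..<\<beta>} \<subseteq> {0<..<1}" using a0 b1 by auto
      fix t
      show "t \<in> {\<alpha><..<\<beta>} \<Longrightarrow> w' t * cnj (v1' t) = w' t * cnj (g1 t)" unfolding v1'_def by simp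
      show "t \<notin> {\<alpha><..<\<beta>} \<Longrightarrow> w' t * cnj (v1' t) = 0" unfolding v1'_def by simp
    qed
    then show ?thesis using ip1 Qv1 unfolding ip_def by simp
  qed
  have sqi: "set_integrable lborel {\<alpha><..<\<beta>} (\<lambda>t. g1 t * cnj (g1 t))"
    using si_ofreal[OF g12] unfolding complex_norm_square .
  have cci: "set_integrable lborel {\<alpha><..<\<beta>} (\<lambda>t. c * cnj (g1 t))"
    by (rule set_integrable_mult_right) (rule si_cnj[OF g1i])
  have cc0: "(LINT t:{\<alpha><..<\<beta>}|lborel. c * cnj (g1 t)) = 0"
    using si_cnj_int[where A="{\<alpha><..<\<beta>}" and M=lborel and f=g1] g1int by simp
  have sq0: "(LINT t:{\<alpha><..<\<beta>}|lborel. g1 t * cnj (g1 t)) = 0"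
  proof -
    have "(\<lambda>t. w' t * cnj (g1 t)) = (\<lambda>t. g1 t * cnj (g1 t) + c * cnj (g1 t))"
      by (rule ext) (simp add: g1_def algebra_simps)
    then have "(LINT t:{\<alpha><..<\<beta>}|lborel. w' t * cnj (g1 t)) = (LINT t:{\<alpha><..<\<beta>}|lborel. g1 t * cnj (g1 t)) + (LINT t:{\<alpha><..<\<beta>}|lborel. c * cnj (g1 t))"
      using set_integral_add(2)[OF sqi cci] by simp
    then show ?thesis using A1 cc0 by (metis add.right_neutral)
  qed
  have r0: "(LINT t:{\<alpha><..<\<beta>}|lborel. (cmod (g1 t))^2) = 0"
  proof -
    have "complex_of_real (LINT t:{\<alpha><..<\<beta>}|lborel. (cmod (g1 t))^2) = (LINT t:{\<alpha><..<\<beta>}|lborel. complex_of_real ((cmod (g1 t))^2))"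
      by (rule set_integral_complex_of_real[symmetric])
    also have "\<dots> = (LINT t:{\<alpha><..<\<beta>}|lborel. g1 t * cnj (g1 t))" by (simp only: complex_norm_square)
    finally show ?thesis using sq0 by simp
  qed
  have part1: "AE y in lborel. y \<in> {\<alpha><..<\<beta>} \<longrightarrow> w' y = c"
  proof -
    have int: "integrable lborel (\<lambda>t. indicator {\<alpha><..<\<beta>} t *\<^sub>R (cmod (g1 t))^2)"
      using g12 unfolding set_integrable_def .
    have nn: "AE t in lborel. 0 \<le> indicator {\<alpha><..<\<beta>} t *\<^sub>R (cmod (g1 t))^2" by (rule AE_I2) simp
    have "AE t in lborel. indicator {\<alpha><..<\<beta>} t *\<^sub>R (cmod (g1 t))^2 = 0"
      using r0 integral_nonneg_eq_0_iff_AE[OF int nn] unfolding set_lebesgue_integral_def by simp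
    then show ?thesis by eventually_elim (auto simp: g1_def)
  qed
  have part2: "\<forall>y\<in>{\<alpha><..<\<beta>}. w y = (w \<beta> - w \<alpha>) / complex_of_real (\<beta> - \<alpha>) * complex_of_real (y - \<alpha>) + w \<alpha>"
  proof
    fix y assume y: "y \<in> {\<alpha><..<\<beta>}"
    have "w y - w \<alpha> = (LINT t:{\<alpha><..<y}|lborel. w' t)" by (rule H1_diff[OF H]) (use y a0 b1 in auto)
    also have "\<dots> = (LINT t:{\<alpha><..<y}|lborel. c)"
    proof -
      have m1: "(\<lambda>x. indicator {\<alpha><..<y} x *\<^sub>R w' x) \<in> borel_measurable lborel"
      proof -
        have sub: "{\<alpha><..<y} \<subseteq> {0<..<1}" using y a0 b1 by auto
        have "set_borel_measurable lborel {\<alpha><..<y} w'"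
          by (rule set_borel_measurable_subset[OF wm _ sub]) simp
        then show ?thesis unfolding set_borel_measurable_def .
      qed
      show ?thesis unfolding set_lebesgue_integral_def
      proof (rule integral_cong_AE)
        show "(\<lambda>x. indicator {\<alpha><..<y} x *\<^sub>R w' x) \<in> borel_measurable lborel" by (rule m1)
        show "(\<lambda>x. indicator {\<alpha><..<y} x *\<^sub>R c) \<in> borel_measurable lborel" by measurable
        show "AE x in lborel. indicator {\<alpha><..<y} x *\<^sub>R w' x = indicator {\<alpha><..<y} x *\<^sub>R c"
          using part1 by eventually_elim (use y in \<open>auto split: split_indicator\<close>)
      qed
    qed
    also have "\<dots> = complex_of_real (y - \<alpha>) * c" using y by (simp add: set_integral_const scaleR_conv_of_real)
    finally have "w y = complex_of_real (y - \<alpha>) * c + w \<alpha>" by (simp add: algebra_simps)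
    then show "w y = (w \<beta> - w \<alpha>) / complex_of_real (\<beta> - \<alpha>) * complex_of_real (y - \<alpha>) + w \<alpha>"
      unfolding cK[symmetric] by (simp add: mult.commute)
  qed
  define e where "e = exp (\<i> * complex_of_real (2 * pi * \<theta>))"
  define e' where "e' = exp (- \<i> * complex_of_real (2 * pi * \<theta>))"
  have cnje: "cnj e = e'" unfolding e_def e'_def by (simp add: exp_cnj)
  define d where "d = (e - 1) / complex_of_real (\<beta> - \<alpha>)"
  define v2' where "v2' = (\<lambda>t. indicator {\<alpha><..<\<beta>} t * d)"
  define v2 where "v2 = (\<lambda>x. (1::complex) + (LINT t:{0..x}|lborel. indicator {\<alpha><..<\<beta>} t * d))"
  have v2H: "H1 v2 v2'" unfolding v2_def v2'_def
    by (rule t_H1[where g="\<lambda>_. d", OF a0' b1' sic sic])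
  have dS: "(LINT t:{\<alpha><..<\<beta>}|lborel. d) = e - 1"
    using ab nz by (simp add: set_integral_const scaleR_conv_of_real d_def)
  have v2low: "\<And>x. x \<le> \<alpha> \<Longrightarrow> v2 x = 1" unfolding v2_def using tv_low[where g="\<lambda>_. d"] by simp
  have v2high: "\<And>x. \<beta> \<le> x \<Longrightarrow> v2 x = e"
    unfolding v2_def using tv_high[where g="\<lambda>_. d", OF a0'] dS by simp
  have v2V: "inV p \<alpha> \<beta> \<theta> v2 v2'"
    unfolding inV_def H1_theta_def
  proof (intro conjI)
    show "H1 v2 v2'" by (rule v2H)
    show "v2 1 = exp (\<i> * complex_of_real (2 * pi * \<theta>)) * v2 0"
      using v2low[OF a0'] v2high[OF b1'] unfolding e_def by simp
    show "AE x in lborel. x \<in> Q1 \<alpha> \<beta> \<longrightarrow> complex_of_real (p x) * v2' x = 0"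
    proof (rule AE_I2, rule impI)
      fix x assume "x \<in> Q1 \<alpha> \<beta>"
      then have "x \<notin> {\<alpha><..<\<beta>}" unfolding Q1_def using ab by auto
      then show "complex_of_real (p x) * v2' x = 0" unfolding v2'_def by simp
    qed
  qed
  have ip2: "ip \<alpha> \<beta> w w' v2 v2' = 0" by (rule orth[OF v2V])
  have Qv2: "(LINT y:Q1 \<alpha> \<beta>|lborel. v2 y) = complex_of_real \<alpha> + complex_of_real (1 - \<beta>) * e"
  proof -
    have i1: "set_integrable lborel {0<..<\<alpha>} v2 = set_integrable lborel {0<..<\<alpha>} (\<lambda>_. 1::complex)"
      by (rule set_integrable_cong) (auto simp: v2low)
    have i2: "set_integrable lborel {\<beta><..<1} v2 = set_integrable lborel {\<beta><..<1} (\<lambda>_. e)"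
      by (rule set_integrable_cong) (auto simp: v2high)
    have "(LINT y:Q1 \<alpha> \<beta>|lborel. v2 y) = (LINT y:{0<..<\<alpha>}|lborel. v2 y) + (LINT y:{\<beta><..<1}|lborel. v2 y)"
      unfolding Q1_def
      by (rule set_integral_Un) (use ab i1 i2 sic in auto)
    moreover have "(LINT y:{0<..<\<alpha>}|lborel. v2 y) = (LINT y:{0<..<\<alpha>}|lborel. 1)"
      by (rule set_lebesgue_integral_cong) (auto simp: v2low)
    moreover have "(LINT y:{0<..<\<alpha>}|lborel. (1::complex)) = complex_of_real \<alpha>"
      using a0 by (simp add: set_integral_const scaleR_conv_of_real)
    moreover have "(LINT y:{\<beta><..<1}|lborel. v2 y) = (LINT y:{\<beta><..<1}|lborel. e)"
      by (rule set_lebesgue_integral_cong) (auto simp: v2high)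
    moreover have "(LINT y:{\<beta><..<1}|lborel. e) = complex_of_real (1 - \<beta>) * e"
      using b1 by (simp add: set_integral_const scaleR_conv_of_real)
    ultimately show ?thesis by simp
  qed
  have B2: "(LINT t:{0<..<1}|lborel. w' t * cnj (v2' t)) = K * cnj d"
  proof -
    have "(LINT t:{0<..<1}|lborel. w' t * cnj (v2' t)) = (LINT t:{\<alpha><..<\<beta>}|lborel. w' t * cnj d)"
    proof (rule set_int_restrict)
      show "{\<alpha><..<\<beta>} \<subseteq> {0<..<1}" using a0 b1 by auto
      fix t
      show "t \<in> {\<alpha><..<\<beta>} \<Longrightarrow> w' t * cnj (v2' t) = w' t * cnj d" unfolding v2'_def by simp
      show "t \<notin> {\<alpha><..<\<beta>} \<Longrightarrow> w' t * cnj (v2' t) = 0" unfolding v2'_def by simp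
    qed
    then show ?thesis unfolding K_def by simp
  qed
  have eqn: "I * cnj (complex_of_real \<alpha> + complex_of_real (1 - \<beta>) * e) + K * cnj d = 0"
    using ip2 Qv2 B2 unfolding ip_def I_def by simp
  define Y where "Y = complex_of_real \<alpha> + complex_of_real (1 - \<beta>) * e'"
  have eqn2: "I * Y + c * (e' - 1) = 0"
  proof -
    have "K * cnj d = c * (e' - 1)" unfolding Kc d_def using nz by (simp add: cnje)
    moreover have "cnj (complex_of_real \<alpha> + complex_of_real (1 - \<beta>) * e) = Y"
      unfolding Y_def by (simp add: cnje)
    ultimately show ?thesis using eqn by simp
  qed
  have part4: "\<theta> = 0 \<longrightarrow> I = 0"
  proof
    assume "\<theta> = 0"
    then have "e' = 1" unfolding e'_def by simp
    then have "I * Y = 0" using eqn2 by simp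
    moreover have "Re Y > 0" using \<open>e' = 1\<close> a0 b1 unfolding Y_def by simp
    then have "Y \<noteq> 0" by auto
    ultimately show "I = 0" by simp
  qed
  have part3: "\<theta> \<noteq> 0 \<longrightarrow> (w \<beta> - w \<alpha>) / complex_of_real (\<beta> - \<alpha>) = inverse (1 - e') * Y * I"
  proof
    assume "\<theta> \<noteq> 0"
    then have tp: "0 < \<theta>" using t0 by simp
    have ne: "e' \<noteq> 1"
    proof
      assume "e' = 1"
      then obtain n :: int where n: "Im (- \<i> * complex_of_real (2 * pi * \<theta>)) = of_int (2 * n) * pi"
        unfolding e'_def exp_eq_1 by blast
      then have "pi * (\<theta> + of_int n) = 0" by (simp add: algebra_simps)
      then have "\<theta> = - of_int n" by simp
      then have "real_of_int n < 0" "real_of_int n > -1" using tp t1 by linarith+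
      then have "n < 0" "n > -1" by simp_all
      then show False by simp
    qed
    then have ne1: "1 - e' \<noteq> 0" by simp
    have "c * (1 - e') = I * Y"
    proof -
      have "c * (1 - e') = c * (1 - e') + (I * Y + c * (e' - 1))" using eqn2 by simp
      also have "\<dots> = I * Y" by (simp add: algebra_simps)
      finally show ?thesis .
    qed
    then have "c = inverse (1 - e') * Y * I" using ne1 by (simp add: field_simps)
    then show "(w \<beta> - w \<alpha>) / complex_of_real (\<beta> - \<alpha>) = inverse (1 - e') * Y * I" using cK by simp
  qed
  show ?thesis
    using part1 part2 part3 part4 unfolding I_def Y_def e'_def by blast
qed

end
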